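(* Let $v\ge1$. If there exists an OA$(2,4,v)$, then there exists a $(2,3,v)$-AONT.
   Context: An orthogonal array OA$(t,k,v)$ over an alphabet $X$ with $|X|=v$ is a $v^t\times k$ array with entries in $X$ such that for every set of $t$ columns, every $t$-tuple of elements of $X$ occurs exactly once as a row of the subarray formed by these columns. Let $0\le t\le s$. A $(t,s,v)$-AONT is a bijection $\phi:X^s\to X^s$ such that for every $I\subseteq\{1,\dots,s\}$ with $|I|=t$ and every $J\subseteq\{1,\dots,s\}$ with $|J|=s-t$, the map $x\mapsto\big((x_i)_{i\in I},(\phi(x)_j)_{j\in J}\big)$ is a bijection $X^s\to X^t\times X^{s-t}$. *)

theory Defs
  imports "HOL-Library.FuncSet"
begin

definition words :: "'a set \<Rightarrow> nat \<Rightarrow> (nat \<Rightarrow> 'a) set" where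
  "words X n = PiE {0..<n} (\<lambda>_. X)"

text \<open>An orthogonal array OA(t,k,v) over X (with card X = v): a v^t x k array,
  given as a family of rows A i (i < v^t), each row a word of length k, such that for
  every set C of t columns and every t-tuple y on C there is exactly one row whose
  restriction to C equals y.\<close>
definition is_OA :: "nat \<Rightarrow> nat \<Rightarrow> 'a set \<Rightarrow> (nat \<Rightarrow> nat \<Rightarrow> 'a) \<Rightarrow> bool" where
  "is_OA t k X A \<longleftrightarrow>
     (\<forall>i < card X ^ t. A i \<in> words X k) \<and>
     (\<forall>C. C \<subseteq> {0..<k} \<and> card C = t \<longrightarrow>
        (\<forall>y \<in> PiE C (\<lambda>_. X). \<exists>!i. i < card X ^ t \<and> restrict (A i) C = y))"

definition OA_exists :: "nat \<Rightarrow> nat \<Rightarrow> 'a set \<Rightarrow> bool" where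
  "OA_exists t k X \<longleftrightarrow> (\<exists>A. is_OA t k X A)"

definition is_AONT :: "nat \<Rightarrow> nat \<Rightarrow> 'a set \<Rightarrow> ((nat \<Rightarrow> 'a) \<Rightarrow> (nat \<Rightarrow> 'a)) \<Rightarrow> bool" where
  "is_AONT t s X \<phi> \<longleftrightarrow>
     t \<le> s \<and>
     bij_betw \<phi> (words X s) (words X s) \<and>
     (\<forall>I J. I \<subseteq> {0..<s} \<and> card I = t \<and> J \<subseteq> {0..<s} \<and> card J = s - t \<longrightarrow>
        bij_betw (\<lambda>x. (restrict x I, restrict (\<phi> x) J)) (words X s)
          (PiE I (\<lambda>_. X) \<times> PiE J (\<lambda>_. X)))"

end

theory Submission
  imports Defs
begin

lemma bij_by_inj:
  assumes "finite B" "inj_on f A" "f ` A \<subseteq> B" "card A = card B"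
  shows "bij_betw f A B"
  unfolding bij_betw_def
  using assms card_image card_subset_eq by metis

lemma card_words: "finite X \<Longrightarrow> card (words X n) = card X ^ n"
  by (simp add: words_def card_PiE)

lemma card_Pi_sub: "finite I \<Longrightarrow> card (PiE I (\<lambda>_. X)) = card X ^ card I"
  by (simp add: card_PiE)

definition qg :: "'a set \<Rightarrow> ('a \<Rightarrow> 'a \<Rightarrow> 'a) \<Rightarrow> bool" where
  "qg X L \<longleftrightarrow> (\<forall>a\<in>X. \<forall>b\<in>X. L a b \<in> X) \<and>
     (\<forall>a\<in>X. \<forall>b\<in>X. \<forall>b'\<in>X. L a b = L a b' \<longrightarrow> b = b') \<and>
     (\<forall>a\<in>X. \<forall>a'\<in>X. \<forall>b\<in>X. L a b = L a' b \<longrightarrow> a = a')"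

lemma comp_a: "qg X P \<Longrightarrow> qg X Q \<Longrightarrow> a \<in> X \<Longrightarrow> a' \<in> X \<Longrightarrow> b \<in> X \<Longrightarrow> c \<in> X \<Longrightarrow>
   Q (P a b) c = Q (P a' b) c \<Longrightarrow> a = a'"
  unfolding qg_def by metis

lemma comp_b: "qg X P \<Longrightarrow> qg X Q \<Longrightarrow> a \<in> X \<Longrightarrow> b \<in> X \<Longrightarrow> b' \<in> X \<Longrightarrow> c \<in> X \<Longrightarrow>
   Q (P a b) c = Q (P a b') c \<Longrightarrow> b = b'"
  unfolding qg_def by metis

lemma comp_c: "qg X P \<Longrightarrow> qg X Q \<Longrightarrow> a \<in> X \<Longrightarrow> b \<in> X \<Longrightarrow> c \<in> X \<Longrightarrow> c' \<in> X \<Longrightarrow>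
   Q (P a b) c = Q (P a b) c' \<Longrightarrow> c = c'"
  unfolding qg_def by metis

lemma quasi_AONT:
  fixes L1 L2 :: "'a \<Rightarrow> 'a \<Rightarrow> 'a"
  assumes fin: "finite X"
    and cl1: "\<And>a b. a \<in> X \<Longrightarrow> b \<in> X \<Longrightarrow> L1 a b \<in> X"
    and cl2: "\<And>a b. a \<in> X \<Longrightarrow> b \<in> X \<Longrightarrow> L2 a b \<in> X"
    and c11: "\<And>a b b'. a \<in> X \<Longrightarrow> b \<in> X \<Longrightarrow> b' \<in> X \<Longrightarrow> L1 a b = L1 a b' \<Longrightarrow> b = b'"
    and c12: "\<And>a a' b. a \<in> X \<Longrightarrow> a' \<in> X \<Longrightarrow> b \<in> X \<Longrightarrow> L1 a b = L1 a' b \<Longrightarrow> a = a'"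
    and c21: "\<And>a b b'. a \<in> X \<Longrightarrow> b \<in> X \<Longrightarrow> b' \<in> X \<Longrightarrow> L2 a b = L2 a b' \<Longrightarrow> b = b'"
    and c22: "\<And>a a' b. a \<in> X \<Longrightarrow> a' \<in> X \<Longrightarrow> b \<in> X \<Longrightarrow> L2 a b = L2 a' b \<Longrightarrow> a = a'"
    and orth: "\<And>a b a' b'. a \<in> X \<Longrightarrow> b \<in> X \<Longrightarrow> a' \<in> X \<Longrightarrow> b' \<in> X \<Longrightarrow>
        L1 a b = L1 a' b' \<Longrightarrow> L2 a b = L2 a' b' \<Longrightarrow> a = a' \<and> b = b'"
  shows "\<exists>\<phi>. is_AONT 2 3 X \<phi>"
proof -
  define \<phi> where "\<phi> x = (\<lambda>i::nat. if i = 0 then L1 (L1 (x 0) (x 1)) (x 2)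
      else if i = 1 then L2 (L1 (x 0) (x 1)) (x 2)
      else if i = 2 then L1 (L2 (x 0) (x 1)) (x 2) else undefined)" for x :: "nat \<Rightarrow> 'a"
  have q1: "qg X L1" unfolding qg_def using cl1 c11 c12 by blast
  have q2: "qg X L2" unfolding qg_def using cl2 c21 c22 by blast
  have memw: "x \<in> words X 3 \<longleftrightarrow> x 0 \<in> X \<and> x 1 \<in> X \<and> x 2 \<in> X \<and> (\<forall>i\<ge>3. x i = undefined)" for x :: "nat \<Rightarrow> 'a"
  proof -
    have r: "{0..<3::nat} = {0,1,2}" by auto
    show ?thesis unfolding words_def r PiE_iff extensional_def
      by (auto simp: not_le)
  qed
  have eqw: "x = y" if "x \<in> words X 3" "y \<in> words X 3" "x 0 = y 0" "x 1 = y 1" "x 2 = y 2" for x y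
  proof
    fix i :: nat
    have "i = 0 \<or> i = 1 \<or> i = 2 \<or> i \<ge> 3" by auto
    then show "x i = y i" using that memw[of x] memw[of y] by (elim disjE) auto
  qed
  have phiw: "\<phi> x \<in> words X 3" if "x \<in> words X 3" for x
    using that unfolding memw by (simp add: \<phi>_def cl1 cl2)
  have bij: "bij_betw \<phi> (words X 3) (words X 3)"
  proof (rule bij_by_inj)
    show "finite (words X 3)" using fin by (simp add: words_def finite_PiE)
    show "\<phi> ` words X 3 \<subseteq> words X 3" using phiw by auto
    show "card (words X 3) = card (words X 3)" ..
    show "inj_on \<phi> (words X 3)"
    proof
      fix x y assume x: "x \<in> words X 3" and y: "y \<in> words X 3" and e: "\<phi> x = \<phi> y"
      have e0: "L1 (L1 (x 0) (x 1)) (x 2) = L1 (L1 (y 0) (y 1)) (y 2)"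
        using fun_cong[OF e, of 0] by (simp add: \<phi>_def)
      have e1: "L2 (L1 (x 0) (x 1)) (x 2) = L2 (L1 (y 0) (y 1)) (y 2)"
        using fun_cong[OF e, of 1] by (simp add: \<phi>_def)
      have e2: "L1 (L2 (x 0) (x 1)) (x 2) = L1 (L2 (y 0) (y 1)) (y 2)"
        using fun_cong[OF e, of 2] by (simp add: \<phi>_def)
      have X: "x 0 \<in> X" "x 1 \<in> X" "x 2 \<in> X" "y 0 \<in> X" "y 1 \<in> X" "y 2 \<in> X"
        using x y memw by auto
      have u: "L1 (x 0) (x 1) = L1 (y 0) (y 1)" and x2: "x 2 = y 2"
        using orth[OF _ _ _ _ e0 e1] X cl1 by auto
      have w: "L2 (x 0) (x 1) = L2 (y 0) (y 1)"
        using c12[of "L2 (x 0) (x 1)" "L2 (y 0) (y 1)" "x 2"] e2 x2 X cl2 by auto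
      have "x 0 = y 0 \<and> x 1 = y 1" using orth[OF _ _ _ _ u w] X by auto
      then show "x = y" using eqw x y x2 by auto
    qed
  qed
  have main: "bij_betw (\<lambda>x. (restrict x I, restrict (\<phi> x) J)) (words X 3)
          (PiE I (\<lambda>_. X) \<times> PiE J (\<lambda>_. X))"
    if I: "I \<subseteq> {0..<3}" "card I = 2" and J: "J \<subseteq> {0..<3}" "card J = 3 - 2" for I J
  proof -
    have "card ({0..<3::nat} - I) = 1" using I by (simp add: card_Diff_subset finite_subset)
    then obtain k where k: "{0..<3::nat} - I = {k}" using card_1_singletonE by blast
    have kk: "k \<in> {0..<3::nat} - I" using k by blast
    have kI: "k < 3" "k \<notin> I" using kk by simp_all
    have Ik: "i \<in> I" if "i < 3" "i \<noteq> k" for i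
    proof -
      have "i \<in> {0..<3::nat}" using that by simp
      moreover have "i \<notin> {0..<3::nat} - I" using k that(2) by blast
      ultimately show ?thesis by blast
    qed
    have "card J = 1" using J(2) by simp
    then obtain j where j: "J = {j}" using card_1_singletonE by blast
    have "j \<in> {0..<3::nat}" using J(1) j by blast
    then have jl: "j < 3" by simp
    have finI: "finite I" using I finite_subset by blast
    show ?thesis
    proof (rule bij_by_inj)
      show "finite (PiE I (\<lambda>_. X) \<times> PiE J (\<lambda>_. X))"
        using fin finI j by (simp add: finite_PiE)
      show "card (words X 3) = card (PiE I (\<lambda>_. X) \<times> PiE J (\<lambda>_. X))"
        using fin finI j I by (simp add: card_words card_Pi_sub card_cartesian_product
 power3_eq_cube power2_eq_square)
      show "(\<lambda>x. (restrict x I, restrict (\<phi> x) J)) ` words X 3 \<subseteq> PiE I (\<lambda>_. X) \<times> PiE J (\<lambda>_. X)"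
      proof clarify
        fix x assume x: "x \<in> words X 3"
        have "\<phi> x \<in> words X 3" using phiw x by auto
        then show "restrict x I \<in> PiE I (\<lambda>_. X) \<and> restrict (\<phi> x) J \<in> PiE J (\<lambda>_. X)"
          using x I J unfolding words_def by auto
      qed
      show "inj_on (\<lambda>x. (restrict x I, restrict (\<phi> x) J)) (words X 3)"
      proof
        fix x y assume x: "x \<in> words X 3" and y: "y \<in> words X 3"
          and e: "(restrict x I, restrict (\<phi> x) J) = (restrict y I, restrict (\<phi> y) J)"
        have ag: "\<And>i. i < 3 \<Longrightarrow> i \<noteq> k \<Longrightarrow> x i = y i"
        proof -
          fix i assume "i < 3" "i \<noteq> k"
          then have "i \<in> I" using Ik by auto
          then show "x i = y i" using fun_cong[OF arg_cong[OF e, of fst], of i] by simp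
        qed
        have ej: "\<phi> x j = \<phi> y j" using fun_cong[OF arg_cong[OF e, of snd], of j] j by simp
        have X: "x 0 \<in> X" "x 1 \<in> X" "x 2 \<in> X" and y_X: "y 0 \<in> X" "y 1 \<in> X" "y 2 \<in> X"
          using x y memw by auto
        have "\<exists>P Q. qg X P \<and> qg X Q \<and> (\<forall>z. \<phi> z j = Q (P (z 0) (z 1)) (z 2))"
        proof -
          have "j = 0 \<or> j = 1 \<or> j = 2" using jl by auto
          then show ?thesis
          proof (elim disjE)
            assume "j = 0" then show ?thesis using q1 by (intro exI[of _ L1]) (simp add: \<phi>_def)
          next
            assume "j = 1" then show ?thesis using q1 q2 by (intro exI[of _ L1] exI[of _ L2]) (simp add: \<phi>_def)
          next
            assume "j = 2" then show ?thesis using q1 q2 by (intro exI[of _ L2] exI[of _ L1]) (simp add: \<phi>_def)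
          qed
        qed
        then obtain P Q where PQ: "qg X P" "qg X Q" and comp: "\<And>z. \<phi> z j = Q (P (z 0) (z 1)) (z 2)"
          by blast
        have E: "Q (P (x 0) (x 1)) (x 2) = Q (P (y 0) (y 1)) (y 2)" using ej comp by metis
        have "k = 0 \<or> k = 1 \<or> k = 2" using kI by auto
        then have "x k = y k"
        proof (elim disjE)
          assume k0: "k = 0"
          have "x 1 = y 1" "x 2 = y 2" using ag k0 by auto
          then show ?thesis using comp_a[OF PQ X(1) y_X(1) X(2) X(3)] E k0 by simp
        next
          assume k1: "k = 1"
          have "x 0 = y 0" "x 2 = y 2" using ag k1 by auto
          then show ?thesis using comp_b[OF PQ X(1) X(2) y_X(2) X(3)] E k1 by simp
        next
          assume k2: "k = 2"
          have "x 0 = y 0" "x 1 = y 1" using ag k2 by auto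
          then show ?thesis using comp_c[OF PQ X(1) X(2) X(3) y_X(3)] E k2 by simp
        qed
        then have "\<And>i. i < 3 \<Longrightarrow> x i = y i" using ag by metis
        then show "x = y" using eqw x y by auto
      qed
    qed
  qed
  show ?thesis
  proof (intro exI[of _ \<phi>])
    show "is_AONT 2 3 X \<phi>" unfolding is_AONT_def
    proof (intro conjI allI impI)
      show "2 \<le> (3::nat)" by simp
      show "bij_betw \<phi> (words X 3) (words X 3)" by (rule bij)
      fix I J :: "nat set" assume h: "I \<subseteq> {0..<3} \<and> card I = 2 \<and> J \<subseteq> {0..<3} \<and> card J = 3 - 2"
      show "bij_betw (\<lambda>x. (restrict x I, restrict (\<phi> x) J)) (words X 3)
          (PiE I (\<lambda>_. X) \<times> PiE J (\<lambda>_. X))"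
        using h by (intro main) simp_all
    qed
  qed
qed


theorem theorem3p7:
  fixes X :: "'a set" and v :: nat
  assumes "finite X" and "card X = v" and "v \<ge> 1"
    and "OA_exists 2 4 X"
  shows "\<exists>\<phi>. is_AONT 2 3 X \<phi>"
proof -
  obtain A where oa: "is_OA 2 4 X A" using assms(4) unfolding OA_exists_def by blast
  define n where "n = card X ^ 2"
  have rows: "\<And>i. i < n \<Longrightarrow> A i \<in> words X 4" using oa unfolding is_OA_def n_def by blast
  have ent: "\<And>i k. i < n \<Longrightarrow> k < 4 \<Longrightarrow> A i k \<in> X"
    using rows unfolding words_def by (auto simp: PiE_iff)
  have uni: "\<forall>C. C \<subseteq> {0..<4} \<and> card C = 2 \<longrightarrow>
        (\<forall>y \<in> PiE C (\<lambda>_. X). \<exists>!i. i < n \<and> restrict (A i) C = y)"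
    using oa unfolding is_OA_def n_def by blast
  have uni': "\<exists>!i. i < n \<and> restrict (A i) C = y"
    if "C \<subseteq> {0..<4}" "card C = 2" "y \<in> PiE C (\<lambda>_. X)" for C y
    using uni that by simp
  have uq: "i = i'" if "c < 4" "d < 4" "c \<noteq> d" "i < n" "i' < n" "A i c = A i' c" "A i d = A i' d"
    for c d i i'
  proof -
    let ?C = "{c, d}"
    have C: "?C \<subseteq> {0..<4} \<and> card ?C = 2" using that by auto
    have y: "restrict (A i) ?C \<in> PiE ?C (\<lambda>_. X)" using ent that by auto
    have h2: "restrict (A i') ?C = restrict (A i) ?C" using that by (auto simp: restrict_def)
    have E: "\<exists>!j. j < n \<and> restrict (A j) ?C = restrict (A i) ?C"
      using C by (intro uni' y) simp_all
    show ?thesis using E h2 that(4,5) by (metis (no_types, lifting))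
  qed
  have ex: "\<exists>i. i < n \<and> A i 0 = a \<and> A i 1 = b" if "a \<in> X" "b \<in> X" for a b
  proof -
    let ?C = "{0::nat, 1}"
    define y where "y = restrict (\<lambda>k::nat. if k = 0 then a else b) ?C"
    have C: "?C \<subseteq> {0..<4} \<and> card ?C = 2" by auto
    have "y \<in> PiE ?C (\<lambda>_. X)" using that unfolding y_def by auto
    then have "\<exists>!i. i < n \<and> restrict (A i) ?C = y" using C by (intro uni') simp_all
    then obtain i where i: "i < n" and eq: "restrict (A i) ?C = y" by blast
    have "restrict (A i) ?C 0 = y 0" "restrict (A i) ?C 1 = y 1" using eq by simp_all
    then have "i < n \<and> A i 0 = a \<and> A i 1 = b" using i unfolding y_def by simp
    then show ?thesis by blast
  qed
  define r where "r a b = (SOME i. i < n \<and> A i 0 = a \<and> A i 1 = b)" for a b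
  have r: "r a b < n \<and> A (r a b) 0 = a \<and> A (r a b) 1 = b" if "a \<in> X" "b \<in> X" for a b
    unfolding r_def using someI_ex[OF ex[OF that]] .
  define L1 where "L1 a b = A (r a b) 2" for a b
  define L2 where "L2 a b = A (r a b) 3" for a b
  show ?thesis
  proof (rule quasi_AONT[of X L1 L2])
    show "finite X" by fact
    show "\<And>a b. a \<in> X \<Longrightarrow> b \<in> X \<Longrightarrow> L1 a b \<in> X" unfolding L1_def using r ent by simp
    show "\<And>a b. a \<in> X \<Longrightarrow> b \<in> X \<Longrightarrow> L2 a b \<in> X" unfolding L2_def using r ent by simp
    show "b = b'" if "a \<in> X" "b \<in> X" "b' \<in> X" "L1 a b = L1 a b'" for a b b'
    proof -
      note r1 = r[OF that(1) that(2)] and r2 = r[OF that(1) that(3)]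
      have "r a b = r a b'" using r1 r2 that(4) unfolding L1_def by (intro uq[of 0 2]) simp_all
      then show ?thesis using r1 r2 by metis
    qed
    show "a = a'" if "a \<in> X" "a' \<in> X" "b \<in> X" "L1 a b = L1 a' b" for a a' b
    proof -
      note r1 = r[OF that(1) that(3)] and r2 = r[OF that(2) that(3)]
      have "r a b = r a' b" using r1 r2 that(4) unfolding L1_def by (intro uq[of 1 2]) simp_all
      then show ?thesis using r1 r2 by metis
    qed
    show "b = b'" if "a \<in> X" "b \<in> X" "b' \<in> X" "L2 a b = L2 a b'" for a b b'
    proof -
      note r1 = r[OF that(1) that(2)] and r2 = r[OF that(1) that(3)]
      have "r a b = r a b'" using r1 r2 that(4) unfolding L2_def by (intro uq[of 0 3]) simp_all
      then show ?thesis using r1 r2 by metis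
    qed
    show "a = a'" if "a \<in> X" "a' \<in> X" "b \<in> X" "L2 a b = L2 a' b" for a a' b
    proof -
      note r1 = r[OF that(1) that(3)] and r2 = r[OF that(2) that(3)]
      have "r a b = r a' b" using r1 r2 that(4) unfolding L2_def by (intro uq[of 1 3]) simp_all
      then show ?thesis using r1 r2 by metis
    qed
    show "a = a' \<and> b = b'" if "a \<in> X" "b \<in> X" "a' \<in> X" "b' \<in> X"
        "L1 a b = L1 a' b'" "L2 a b = L2 a' b'" for a b a' b'
    proof -
      note r1 = r[OF that(1) that(2)] and r2 = r[OF that(3) that(4)]
      have "r a b = r a' b'" using r1 r2 that(5,6) unfolding L1_def L2_def by (intro uq[of 2 3]) simp_all
      then show ?thesis using r1 r2 by metis
    qed
  qed
qed

end
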